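(* Let $0<\alpha<1$, and for $0<t<1$ let $T_t$ be the weighted composition operator $T_t(f)(z)=\frac{1}{(t-1)z+1}\,f\!\left(\frac{t}{(t-1)z+1}\right)$, $z\in\mathbb D$, acting on $H^\infty_\alpha$. Put $$x_0=\frac{\alpha+2\alpha t-t-\sqrt{4\alpha^2t-2\alpha t+\alpha^2-2\alpha+1}}{2\alpha-1}.$$ Then $$\|T_t\|_{H^\infty_\alpha\to H^\infty_\alpha}=\begin{cases}\dfrac{t^{\alpha-1}}{(1-t)^\alpha} & \text{if } 0<\alpha\le 2/3,\ 0<t<1,\ \text{or if } 2/3<\alpha<1,\ \frac{3\alpha-2}{4\alpha-2}\le t<1,\\[2mm] (1-x_0)^{2\alpha-1}\left(\dfrac{1-\left|\frac{x_0}{1-t}\right|^2}{(1-x_0)^2-t^2}\right)^{\alpha} & \text{if } 2/3<\alpha<1,\ 0<t<\frac{3\alpha-2}{4\alpha-2}.\end{cases}$$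
   Context: $\mathbb D$ is the open unit disc of $\mathbb C$. For $0<\alpha<1$, the Korenblum space is $H^\infty_\alpha=\{f \text{ analytic on } \mathbb D: \|f\|_{H^\infty_\alpha}=\sup_{z\in\mathbb D}(1-|z|^2)^\alpha|f(z)|<\infty\}$, and $\|T\|_{H^\infty_\alpha\to H^\infty_\alpha}$ denotes the operator norm. *)

theory Defs
  imports "HOL-Analysis.Analysis"
begin

text \<open>Korenblum (growth) space on the unit disc. Functions are total on \<complex>;
only their values on the open unit disc matter.\<close>

definition korenblum_norm :: "real \<Rightarrow> (complex \<Rightarrow> complex) \<Rightarrow> real" where
  "korenblum_norm \<alpha> f = (SUP z\<in>ball 0 1. (1 - (cmod z)^2) powr \<alpha> * cmod (f z))"

definition in_korenblum :: "real \<Rightarrow> (complex \<Rightarrow> complex) \<Rightarrow> bool" where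
  "in_korenblum \<alpha> f \<longleftrightarrow> f holomorphic_on ball 0 1 \<and>
     bdd_above ((\<lambda>z. (1 - (cmod z)^2) powr \<alpha> * cmod (f z)) ` ball 0 1)"

definition korenblum_op_norm :: "real \<Rightarrow> ((complex \<Rightarrow> complex) \<Rightarrow> (complex \<Rightarrow> complex)) \<Rightarrow> real" where
  "korenblum_op_norm \<alpha> T =
     Sup {korenblum_norm \<alpha> (T f) | f. in_korenblum \<alpha> f \<and> korenblum_norm \<alpha> f \<le> 1}"

definition wcomp_T :: "real \<Rightarrow> (complex \<Rightarrow> complex) \<Rightarrow> (complex \<Rightarrow> complex)" where
  "wcomp_T t f = (\<lambda>z. (1 / ((of_real t - 1) * z + 1)) * f (of_real t / ((of_real t - 1) * z + 1)))"

end

theory Submission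
  imports Defs
begin

definition LL :: "real \<Rightarrow> real \<Rightarrow> real \<Rightarrow> real" where
  "LL a t x = a*ln(1+x) - a*ln(1+t-(1-t)*x) + (2*a-1)*ln(1-(1-t)*x) - a*ln(1-t)"
definition DL :: "real \<Rightarrow> real \<Rightarrow> real \<Rightarrow> real" where
  "DL a t x = a/(1+x) + a*(1-t)/(1+t-(1-t)*x) - (2*a-1)*(1-t)/(1-(1-t)*x)"
definition GG :: "real \<Rightarrow> real \<Rightarrow> real \<Rightarrow> real" where
  "GG a t x = (1-x^2) powr a / ((1-(1-t)*x) * (1 - t^2/(1-(1-t)*x)^2) powr a)"
definition MV :: "real \<Rightarrow> real \<Rightarrow> real" where
  "MV a t = (if a \<le> 2/3 \<or> (3*a - 2) / (4*a - 2) \<le> t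
     then t powr (a - 1) / (1 - t) powr a
     else (1 - (a + 2*a*t - t - sqrt (4*a^2*t - 2*a*t + a^2 - 2*a + 1)) / (2*a - 1)) powr (2*a - 1) *
       ((1 - \<bar>(a + 2*a*t - t - sqrt (4*a^2*t - 2*a*t + a^2 - 2*a + 1)) / (2*a - 1) / (1 - t)\<bar>^2) /
        ((1 - (a + 2*a*t - t - sqrt (4*a^2*t - 2*a*t + a^2 - 2*a + 1)) / (2*a - 1))^2 - t^2)) powr a)"
definition fb :: "real \<Rightarrow> real \<Rightarrow> complex \<Rightarrow> complex" where
  "fb a b z = of_real ((1 - b^2) powr a) / (1 - of_real b * z) powr of_real (2*a)"
definition PP :: "real \<Rightarrow> real \<Rightarrow> real \<Rightarrow> real" where
  "PP a t u = 2*a*(1-u) - (2*a-1)*(1-(t-u)^2)"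

context
  fixes a t :: real
  assumes a0: "0 < a" and a1: "a < 1" and t0: "0 < t" and t1: "t < 1"
begin

lemma pos_facts:
  assumes "-1 < x" "x \<le> 1"
  shows "0 < 1+x" "0 < 1+t-(1-t)*x" "0 < 1-(1-t)*x" "t \<le> 1-(1-t)*x"
proof -
  have "(1-t)*x \<le> 1-t" using assms t1 by (simp add: mult_left_le)
  then show "0 < 1+t-(1-t)*x" "0 < 1-(1-t)*x" "t \<le> 1-(1-t)*x" using t0 by auto
qed (use assms in auto)

lemma LL_deriv:
  assumes "-1 < x" "x \<le> 1"
  shows "(LL a t has_real_derivative DL a t x) (at x)"
proof -
  note p = pos_facts[OF assms]
  have d1: "((\<lambda>x. ln (1+x)) has_real_derivative (1/(1+x))) (at x)"
    using p by (auto intro!: derivative_eq_intros)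
  have d2: "((\<lambda>x. ln (1+t-(1-t)*x)) has_real_derivative (-(1-t)/(1+t-(1-t)*x))) (at x)"
    using p by (auto intro!: derivative_eq_intros)
  have d3: "((\<lambda>x. ln (1-(1-t)*x)) has_real_derivative (-(1-t)/(1-(1-t)*x))) (at x)"
    using p by (auto intro!: derivative_eq_intros)
  have eq: "DL a t x = a*(1/(1+x)) - a*(-(1-t)/(1+t-(1-t)*x)) + (2*a-1)*(-(1-t)/(1-(1-t)*x)) - 0"
    unfolding DL_def using p by (simp add: field_simps)
  show ?thesis unfolding eq LL_def
    by (intro DERIV_diff DERIV_add DERIV_cmult d1 d2 d3 DERIV_const)
qed

lemma DL_PP:
  assumes "-1 < x" "x \<le> 1"
  shows "DL a t x * ((1+x)*(1+t-(1-t)*x)*(1-(1-t)*x)) = PP a t ((1-t)*x)"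
proof -
  note p = pos_facts[OF assms]
  define A where "A = 1+x"
  define B where "B = 1+t-(1-t)*x"
  define C where "C = 1-(1-t)*x"
  have nz: "A \<noteq> 0" "B \<noteq> 0" "C \<noteq> 0" using p unfolding A_def B_def C_def by auto
  have eq: "DL a t x = a/A + a*(1-t)/B - (2*a-1)*(1-t)/C" unfolding DL_def A_def B_def C_def by simp
  have "DL a t x * (A*B*C) = a/A*(A*B*C) + a*(1-t)/B*(A*B*C) - (2*a-1)*(1-t)/C*(A*B*C)"
    unfolding eq by (simp only: distrib_right left_diff_distrib)
  also have "... = a*(B*C) + a*(1-t)*(A*C) - (2*a-1)*(1-t)*(A*B)" using nz by simp
  also have "... = PP a t ((1-t)*x)" unfolding PP_def A_def B_def C_def by (simp add: power2_eq_square algebra_simps)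
  finally show ?thesis unfolding A_def B_def C_def .
qed

lemma DL_eq:
  assumes "-1 < x" "x \<le> 1"
  shows "DL a t x = PP a t ((1-t)*x) / ((1+x)*(1+t-(1-t)*x)*(1-(1-t)*x))"
    "0 < (1+x)*(1+t-(1-t)*x)*(1-(1-t)*x)"
proof -
  note p = pos_facts[OF assms]
  show X: "0 < (1+x)*(1+t-(1-t)*x)*(1-(1-t)*x)" using p by simp
  have "DL a t x = DL a t x * ((1+x)*(1+t-(1-t)*x)*(1-(1-t)*x)) / ((1+x)*(1+t-(1-t)*x)*(1-(1-t)*x))"
    by (rule nonzero_mult_div_cancel_right[symmetric]) (use X in linarith)
  then show "DL a t x = PP a t ((1-t)*x) / ((1+x)*(1+t-(1-t)*x)*(1-(1-t)*x))"
    using DL_PP[OF assms] by simp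
qed

lemma DL_sign:
  assumes "-1 < x" "x \<le> 1"
  shows "DL a t x \<ge> 0 \<longleftrightarrow> PP a t ((1-t)*x) \<ge> 0"
  using DL_eq[OF assms] by (simp add: zero_le_divide_iff)

lemma DL_sign':
  assumes "-1 < x" "x \<le> 1"
  shows "DL a t x \<le> 0 \<longleftrightarrow> PP a t ((1-t)*x) \<le> 0"
  using DL_eq[OF assms] by (simp add: divide_le_0_iff)

lemma PP_mono:
  assumes "1/2 < a" "-(1-t) \<le> u1" "u1 \<le> u2" "u2 \<le> 1-t"
  shows "PP a t u2 \<le> PP a t u1"
proof -
  have id: "PP a t u1 - PP a t u2 = (u2-u1) * (2*a + (2*a-1)*((t-u1)+(t-u2)))"
    unfolding PP_def by (simp add: power2_eq_square algebra_simps)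
  have "(2*a-1)*((t-u1)+(t-u2)) \<ge> (2*a-1)*(-2)"
    using assms t0 by (intro mult_left_mono) auto
  then have "(2*a-1)*((t-u1)+(t-u2)) \<ge> 2 - 4*a" by (simp add: algebra_simps)
  then have "0 \<le> 2*a + (2*a-1)*((t-u1)+(t-u2))" using a1 by linarith
  then have "0 \<le> PP a t u1 - PP a t u2" unfolding id using assms by simp
  then show ?thesis by simp
qed

lemma PP_pos_small:
  assumes "a \<le> 1/2" "-(1-t) \<le> u" "u \<le> 1-t"
  shows "0 < PP a t u"
proof -
  have "\<bar>t-u\<bar> \<le> 1" using assms t0 t1 by auto
  then have "(t-u)^2 \<le> 1" by (metis abs_le_square_iff abs_one power_one)
  then have "0 \<le> (1-2*a)*(1-(t-u)^2)" using assms by simp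
  moreover have "0 < 2*a*(1-u)" using assms a0 t0 by simp
  ultimately show ?thesis unfolding PP_def by (simp add: algebra_simps)
qed

lemma PP_s: "PP a t (1-t) = t*(4 - 6*a + (8*a-4)*t)"
  unfolding PP_def by (simp add: power2_eq_square algebra_simps)

lemma cond_cases:
  shows "(a \<le> 2/3 \<or> (3*a-2)/(4*a-2) \<le> t) \<Longrightarrow> a \<le> 1/2 \<or> (1/2 < a \<and> PP a t (1-t) \<ge> 0)"
    and "\<not>(a \<le> 2/3 \<or> (3*a-2)/(4*a-2) \<le> t) \<Longrightarrow> 2/3 < a \<and> PP a t (1-t) < 0"
proof -
  assume c: "a \<le> 2/3 \<or> (3*a-2)/(4*a-2) \<le> t"
  show "a \<le> 1/2 \<or> (1/2 < a \<and> PP a t (1-t) \<ge> 0)"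
  proof (cases "a \<le> 1/2")
    case False
    have "0 \<le> 4 - 6*a + (8*a-4)*t"
    proof (cases "a \<le> 2/3")
      case True
      have "0 \<le> (8*a-4)*t" using False t0 by simp
      then show ?thesis using True by linarith
    next
      case F2: False
      with c have "(3*a-2)/(4*a-2) \<le> t" by simp
      then have "3*a-2 \<le> t*(4*a-2)" using False by (simp add: divide_le_eq)
      then show ?thesis by (simp add: algebra_simps)
    qed
    then show ?thesis using False PP_s t0 by simp
  qed simp
next
  assume c: "\<not>(a \<le> 2/3 \<or> (3*a-2)/(4*a-2) \<le> t)"
  then have a23: "2/3 < a" and "t < (3*a-2)/(4*a-2)" by auto
  then have "t*(4*a-2) < 3*a-2" by (simp add: less_divide_eq)
  then have "4 - 6*a + (8*a-4)*t < 0" by (simp add: algebra_simps)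
  then show "2/3 < a \<and> PP a t (1-t) < 0" using a23 PP_s t0 by (simp add: mult_pos_neg)
qed

lemma x0_props:
  assumes ah: "1/2 < a" and Pneg: "PP a t (1-t) < 0"
  defines "x0 \<equiv> (a + 2*a*t - t - sqrt (4*a^2*t - 2*a*t + a^2 - 2*a + 1)) / (2*a - 1)"
  shows "PP a t x0 = 0" "-(1-t) < x0" "x0 < 1-t"
proof -
  define D where "D = 4*a^2*t - 2*a*t + a^2 - 2*a + 1"
  define r where "r = sqrt D"
  define k where "k = 2*a - 1"
  have k0: "0 < k" using ah unfolding k_def by simp
  have De: "D = (1-a)^2 + 2*a*t*(2*a-1)" unfolding D_def by (simp add: power2_eq_square algebra_simps)
  have "0 \<le> 2*a*t*(2*a-1)" using ah a0 t0 by simp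
  then have D0: "0 \<le> D" unfolding De by (intro add_nonneg_nonneg) auto
  have r2: "r^2 = D" unfolding r_def using D0 by simp
  have r0: "0 \<le> r" unfolding r_def using D0 by simp
  define pv where "pv = (r - a)/k"
  have x0eq: "x0 = t - pv"
  proof -
    have "x0 = (a + 2*a*t - t - r) / k" unfolding x0_def r_def D_def k_def by simp
    also have "a + 2*a*t - t - r = t*k - (r - a)" unfolding k_def by (simp add: algebra_simps)
    also have "(t*k - (r - a)) / k = t - pv" unfolding pv_def using k0 by (simp add: diff_divide_distrib)
    finally show ?thesis .
  qed
  have fac: "k * PP a t (t-w) = (k*w + a - r)*(k*w + a + r)" for w
  proof -
    have "(k*w + a - r)*(k*w + a + r) = (k*w+a)^2 - r^2" by (simp add: power2_eq_square algebra_simps)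
    also have "... = (k*w+a)^2 - D" using r2 by simp
    also have "... = k * PP a t (t-w)" unfolding PP_def D_def k_def by (simp add: power2_eq_square algebra_simps)
    finally show ?thesis by simp
  qed
  have kpv: "k*pv = r - a" unfolding pv_def using k0 by simp
  have "k * PP a t x0 = 0" using fac[of pv] kpv unfolding x0eq by simp
  then show "PP a t x0 = 0" using k0 by simp
  have "k * PP a t (1-t) < 0" using Pneg k0 by (simp add: mult_pos_neg)
  then have "(k*(2*t-1) + a - r)*(k*(2*t-1) + a + r) < 0" using fac[of "2*t-1"] by simp
  moreover have "0 < k*(2*t-1) + a + r"
  proof -
    have "k*(2*t-1) \<ge> k*(-1)" using k0 t0 by (intro mult_left_mono) auto
    then have "k*(2*t-1) \<ge> -k" by simp
    then show ?thesis using r0 a1 k_def by linarith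
  qed
  ultimately have "k*(2*t-1) + a - r < 0" by (simp add: mult_less_0_iff)
  then have "k*(2*t-1) < k*pv" using kpv by linarith
  then have "2*t-1 < pv" using k0 by simp
  then show "x0 < 1-t" unfolding x0eq by simp
  have "PP a t (t-1) = 2*a*(2-t)" unfolding PP_def by simp
  then have "0 < k * PP a t (t-1)" using k0 a0 t1 by simp
  then have "0 < (k*1 + a - r)*(k*1 + a + r)" using fac[of 1] by simp
  moreover have "0 < k*1 + a + r" using k0 r0 a0 by simp
  ultimately have "0 < k*1 + a - r" by (simp add: zero_less_mult_iff)
  then have "k*pv < k*1" using kpv by linarith
  then have "pv < 1" using k0 by simp
  then show "-(1-t) < x0" unfolding x0eq by simp
qed

lemma LL_cont: "-1 < x0 \<Longrightarrow> x1 \<le> 1 \<Longrightarrow> continuous_on {x0..x1} (LL a t)"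
  by (intro continuous_at_imp_continuous_on ballI DERIV_isCont[OF LL_deriv]) auto

lemma su_bounds:
  assumes "-1 \<le> y" "y \<le> 1"
  shows "-(1-t) \<le> (1-t)*y" "(1-t)*y \<le> 1-t"
proof -
  have "(1-t)*(-1) \<le> (1-t)*y" using assms t1 by (intro mult_left_mono) auto
  then show "-(1-t) \<le> (1-t)*y" by simp
  show "(1-t)*y \<le> 1-t" using assms t1 by (simp add: mult_left_le)
qed

lemma case1_mono:
  assumes c: "a \<le> 1/2 \<or> (1/2 < a \<and> PP a t (1-t) \<ge> 0)" and x: "-1 < x" "x \<le> 1"
  shows "LL a t x \<le> LL a t 1"
proof (rule DERIV_nonneg_imp_increasing_open[OF x(2)])
  show "continuous_on {x..1} (LL a t)" using LL_cont x by simp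
  fix y assume y: "x < y" "y < 1"
  have b: "-(1-t) \<le> (1-t)*y" "(1-t)*y \<le> 1-t" using su_bounds[of y] x y by auto
  have "PP a t ((1-t)*y) \<ge> 0"
  proof (cases "a \<le> 1/2")
    case True then show ?thesis using PP_pos_small[OF True b] by simp
  next
    case False
    then have "PP a t (1-t) \<le> PP a t ((1-t)*y)" using PP_mono[of "(1-t)*y" "1-t"] b by simp
    then show ?thesis using c False by linarith
  qed
  then have "DL a t y \<ge> 0" using DL_sign[of y] x y by simp
  then show "\<exists>d. (LL a t has_real_derivative d) (at y) \<and> 0 \<le> d"
    using LL_deriv[of y] x y by auto
qed

lemma case2_mono:
  assumes ah: "1/2 < a" and xb: "-(1-t) < x0" "x0 < 1-t" and P0: "PP a t x0 = 0"
    and x: "-1 < x" "x \<le> 1"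
  shows "LL a t x \<le> LL a t (x0/(1-t))"
proof -
  define xs where "xs = x0/(1-t)"
  have sxs: "(1-t)*xs = x0" unfolding xs_def using t1 by simp
  have xs1: "-1 < xs" "xs < 1" unfolding xs_def using xb t1 by (simp_all add: field_simps)
  have "LL a t x \<le> LL a t xs"
  proof (cases "x \<le> xs")
    case True
    show ?thesis
    proof (rule DERIV_nonneg_imp_increasing_open[OF True])
      show "continuous_on {x..xs} (LL a t)" using LL_cont x xs1 by simp
      fix y assume y: "x < y" "y < xs"
      have b: "-(1-t) \<le> (1-t)*y" "(1-t)*y \<le> 1-t" using su_bounds[of y] x y xs1 by auto
      have "(1-t)*y \<le> (1-t)*xs" using y t1 by (intro mult_left_mono) auto
      then have "PP a t x0 \<le> PP a t ((1-t)*y)" using PP_mono[OF ah b(1), of x0] xb sxs by simp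
      then have "DL a t y \<ge> 0" using DL_sign[of y] x y xs1 P0 by simp
      then show "\<exists>d. (LL a t has_real_derivative d) (at y) \<and> 0 \<le> d"
        using LL_deriv[of y] x y xs1 by auto
    qed
  next
    case False
    then have le: "xs \<le> x" by simp
    show ?thesis
    proof (rule DERIV_nonpos_imp_decreasing_open[OF le])
      show "continuous_on {xs..x} (LL a t)" using LL_cont x xs1 by simp
      fix y assume y: "xs < y" "y < x"
      have b: "-(1-t) \<le> (1-t)*y" "(1-t)*y \<le> 1-t" using su_bounds[of y] x y xs1 by auto
      have "(1-t)*xs \<le> (1-t)*y" using y t1 by (intro mult_left_mono) auto
      then have "PP a t ((1-t)*y) \<le> PP a t x0" using PP_mono[OF ah _ _ b(2), of x0] xb sxs by simp
      then have "DL a t y \<le> 0" using DL_sign'[of y] x y xs1 P0 by simp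
      then show "\<exists>d. (LL a t has_real_derivative d) (at y) \<and> d \<le> 0"
        using LL_deriv[of y] x y xs1 by auto
    qed
  qed
  then show ?thesis unfolding xs_def .
qed

lemma G_facts:
  assumes "-1 < x" "x < 1"
  shows "0 < 1-x^2" "t < 1-(1-t)*x" "0 < 1 - t^2/(1-(1-t)*x)^2" "0 < (1-(1-t)*x)^2 - t^2"
    "0 < 1-(1-t)*x" "0 < 1+t-(1-t)*x" "0 < 1-x" "0 < 1+x"
proof -
  have "\<bar>x\<bar> < 1" using assms by auto
  then have "x^2 < 1" by (simp add: abs_square_less_1)
  then show "0 < 1-x^2" by simp
  have "(1-t)*x < 1-t" using assms t1 by simp
  then show tl: "t < 1-(1-t)*x" by simp
  then have "t^2 < (1-(1-t)*x)^2" using t0 by (intro power_strict_mono) auto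
  then show "0 < (1-(1-t)*x)^2 - t^2" by simp
  moreover have "0 < (1-(1-t)*x)^2" using tl t0 by simp
  ultimately show "0 < 1 - t^2/(1-(1-t)*x)^2" by (simp add: field_simps)
  show "0 < 1-(1-t)*x" "0 < 1+t-(1-t)*x" using tl t0 by linarith+
  show "0 < 1-x" "0 < 1+x" using assms by auto
qed

lemma G_eqs:
  shows "1-x^2 = (1-x)*(1+x)" "(1-(1-t)*x)^2 - t^2 = (1-t)*(1-x)*(1+t-(1-t)*x)"
  by (simp_all add: power2_eq_square algebra_simps)

lemma Q_eq: assumes "-1 < x" "x < 1"
  shows "1 - t^2/(1-(1-t)*x)^2 = ((1-(1-t)*x)^2 - t^2)/(1-(1-t)*x)^2"
proof -
  have "0 < (1-(1-t)*x)^2" using G_facts(5)[OF assms] by simp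
  then show ?thesis by (simp add: field_simps)
qed

lemma G_pos: assumes "-1 < x" "x < 1" shows "0 < GG a t x"
proof -
  note g = G_facts[OF assms]
  define A where "A = 1-x^2"
  define C where "C = 1-(1-t)*x"
  define Q where "Q = 1 - t^2/(1-(1-t)*x)^2"
  have "0 < A" "0 < C" "0 < Q" using g unfolding A_def C_def Q_def by auto
  then have "0 < A powr a / (C * Q powr a)" by simp
  then show ?thesis unfolding GG_def A_def C_def Q_def .
qed

lemma ln_G:
  assumes "-1 < x" "x < 1"
  shows "ln (GG a t x) = a*ln(1-x^2) - ln(1-(1-t)*x) - a*(ln((1-(1-t)*x)^2 - t^2) - 2*ln(1-(1-t)*x))"
proof -
  note g = G_facts[OF assms]
  define A where "A = 1-x^2"
  define C where "C = 1-(1-t)*x"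
  define E where "E = (1-(1-t)*x)^2 - t^2"
  have p: "0 < A" "0 < C" "0 < E" using g unfolding A_def C_def E_def by auto
  have "GG a t x = A powr a / (C * (E / C^2) powr a)"
    unfolding GG_def A_def C_def E_def Q_eq[OF assms] ..
  also have "ln (A powr a / (C * (E / C^2) powr a)) = a*ln A - ln C - a*(ln E - 2*ln C)"
    using p by (simp add: ln_divide_pos ln_mult_pos ln_realpow)
  finally show ?thesis unfolding A_def C_def E_def .
qed

lemma G_eq:
  assumes "-1 < x" "x < 1"
  shows "GG a t x = exp (LL a t x)"
proof -
  note g = G_facts[OF assms]
  have l1: "ln(1-x^2) = ln(1-x) + ln(1+x)"
    unfolding G_eqs(1) using g by (rule_tac ln_mult_pos) auto
  have l2: "ln((1-(1-t)*x)^2 - t^2) = ln(1-t) + ln(1-x) + ln(1+t-(1-t)*x)"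
    unfolding G_eqs(2) using g t1 by (simp add: ln_mult_pos)
  have "ln (GG a t x) = LL a t x"
    unfolding ln_G[OF assms] l1 l2 LL_def by (simp add: algebra_simps)
  then show ?thesis using G_pos[OF assms] by (metis exp_ln)
qed

lemma G_alt:
  assumes "-1 < x" "x < 1"
  shows "GG a t x = (1-(1-t)*x) powr (2*a-1) * ((1-x^2)/((1-(1-t)*x)^2-t^2)) powr a"
proof -
  note g = G_facts[OF assms]
  define A where "A = 1-x^2"
  define C where "C = 1-(1-t)*x"
  define E where "E = (1-(1-t)*x)^2 - t^2"
  have p: "0 < A" "0 < C" "0 < E" using g unfolding A_def C_def E_def by auto
  have R: "0 < C powr (2*a-1) * (A/E) powr a" using p by simp
  have "ln (C powr (2*a-1) * (A/E) powr a) = (2*a-1)*ln C + a*(ln A - ln E)"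
    using p by (simp add: ln_divide_pos ln_mult_pos)
  also have "... = ln (GG a t x)" unfolding ln_G[OF assms]
    by (simp add: A_def C_def E_def algebra_simps)
  finally have "ln (C powr (2*a-1) * (A/E) powr a) = ln (GG a t x)" .
  then have "GG a t x = C powr (2*a-1) * (A/E) powr a" using R G_pos[OF assms] by simp
  then show ?thesis unfolding A_def C_def E_def .
qed

lemma E1: "t powr (a-1) / (1-t) powr a = exp (LL a t 1)"
proof -
  have "LL a t 1 = (a-1)*ln t - a*ln(1-t)"
    unfolding LL_def using t0 by (simp add: ln_mult_pos algebra_simps)
  then show ?thesis using t0 t1 by (simp add: powr_def exp_diff)
qed

lemma M_upper:
  assumes "-1 < x" "x < 1"
  defines "X0 \<equiv> (a + 2*a*t - t - sqrt (4*a^2*t - 2*a*t + a^2 - 2*a + 1)) / (2*a - 1)"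
  shows "exp (LL a t x) \<le> (if a \<le> 2/3 \<or> (3*a - 2) / (4*a - 2) \<le> t
     then t powr (a - 1) / (1 - t) powr a
     else (1 - X0) powr (2*a - 1) * ((1 - \<bar>X0 / (1 - t)\<bar>^2) / ((1 - X0)^2 - t^2)) powr a)"
proof (cases "a \<le> 2/3 \<or> (3*a - 2) / (4*a - 2) \<le> t")
  case True
  have "LL a t x \<le> LL a t 1" using case1_mono[OF cond_cases(1)[OF True]] assms by simp
  then show ?thesis using True E1 by simp
next
  case False
  note c = cond_cases(2)[OF False]
  have ah: "1/2 < a" using c by simp
  note xp = x0_props[OF ah conjunct2[OF c], folded X0_def]
  define xs where "xs = X0/(1-t)"
  have sxs: "(1-t)*xs = X0" unfolding xs_def using t1 by simp
  have xs1: "-1 < xs" "xs < 1" unfolding xs_def using xp t1 by (simp_all add: field_simps)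
  have "LL a t x \<le> LL a t xs" unfolding xs_def using case2_mono[OF ah xp(2,3,1)] assms by simp
  then have "exp (LL a t x) \<le> GG a t xs" using G_eq[OF xs1] by simp
  also have "GG a t xs = (1 - X0) powr (2*a - 1) * ((1 - \<bar>X0 / (1 - t)\<bar>^2) / ((1 - X0)^2 - t^2)) powr a"
  proof -
    have ab: "\<bar>X0/(1-t)\<bar>^2 = xs^2" unfolding xs_def by (rule power2_abs)
    show ?thesis unfolding G_alt[OF xs1] sxs ab ..
  qed
  finally show ?thesis using False by simp
qed

lemma M_attained:
  assumes y: "\<And>x. -1 < x \<Longrightarrow> x < 1 \<Longrightarrow> exp (LL a t x) \<le> y"
  defines "X0 \<equiv> (a + 2*a*t - t - sqrt (4*a^2*t - 2*a*t + a^2 - 2*a + 1)) / (2*a - 1)"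
  shows "(if a \<le> 2/3 \<or> (3*a - 2) / (4*a - 2) \<le> t
     then t powr (a - 1) / (1 - t) powr a
     else (1 - X0) powr (2*a - 1) * ((1 - \<bar>X0 / (1 - t)\<bar>^2) / ((1 - X0)^2 - t^2)) powr a) \<le> y"
proof (cases "a \<le> 2/3 \<or> (3*a - 2) / (4*a - 2) \<le> t")
  case True
  have "isCont (\<lambda>x. LL a t x) 1" using DERIV_isCont[OF LL_deriv[of 1]] by simp
  then have "isCont (\<lambda>x. exp (LL a t x)) 1" by (intro continuous_intros)
  then have "((\<lambda>x. exp (LL a t x)) \<longlongrightarrow> exp (LL a t 1)) (at 1)" by (simp add: isCont_def)
  then have lim: "((\<lambda>x. exp (LL a t x)) \<longlongrightarrow> exp (LL a t 1)) (at_left 1)"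
    by (rule tendsto_mono[OF at_le[OF subset_UNIV]])
  have ev: "eventually (\<lambda>x. exp (LL a t x) \<le> y) (at_left (1::real))"
    using eventually_at_left_real[of "-1" "1::real"] by (rule eventually_mono) (use y in auto)
  have "exp (LL a t 1) \<le> y" using tendsto_upperbound[OF lim ev] by simp
  then show ?thesis using True E1 by simp
next
  case False
  note c = cond_cases(2)[OF False]
  have ah: "1/2 < a" using c by simp
  note xp = x0_props[OF ah conjunct2[OF c], folded X0_def]
  define xs where "xs = X0/(1-t)"
  have sxs: "(1-t)*xs = X0" unfolding xs_def using t1 by simp
  have xs1: "-1 < xs" "xs < 1" unfolding xs_def using xp t1 by (simp_all add: field_simps)
  have "GG a t xs = (1 - X0) powr (2*a - 1) * ((1 - \<bar>X0 / (1 - t)\<bar>^2) / ((1 - X0)^2 - t^2)) powr a"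
  proof -
    have ab: "\<bar>X0/(1-t)\<bar>^2 = xs^2" unfolding xs_def by (rule power2_abs)
    show ?thesis unfolding G_alt[OF xs1] sxs ab ..
  qed
  moreover have "GG a t xs \<le> y" using G_eq[OF xs1] y[OF xs1] by simp
  ultimately show ?thesis using False by simp
qed

lemma MV_upper: "-1 < x \<Longrightarrow> x < 1 \<Longrightarrow> exp (LL a t x) \<le> MV a t"
  unfolding MV_def by (rule M_upper)

lemma MV_attained: "(\<And>x. -1 < x \<Longrightarrow> x < 1 \<Longrightarrow> exp (LL a t x) \<le> y) \<Longrightarrow> MV a t \<le> y"
  unfolding MV_def by (rule M_attained)

lemma W_eq: "(of_real t - 1) * z + 1 = 1 - of_real (1-t) * (z::complex)"
  by (simp add: algebra_simps)

lemma W_norm: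
  assumes "cmod z < 1"
  shows "t < cmod (1 - of_real (1-t) * z)" "1 - (1-t) * Re z \<le> cmod (1 - of_real (1-t) * z)"
proof -
  have "cmod (of_real (1-t) * z) = \<bar>1-t\<bar> * cmod z" by (simp only: norm_mult norm_of_real)
  then have "cmod (of_real (1-t) * z) = (1-t) * cmod z" using t1 by simp
  also have "... < 1 - t" using assms t1 by simp
  finally have "1 - cmod (of_real (1-t) * z) > t" by simp
  moreover have "1 - cmod (of_real (1-t) * z) \<le> cmod (1 - of_real (1-t) * z)"
    using norm_triangle_ineq2[of 1 "of_real (1-t) * z"] by simp
  ultimately show "t < cmod (1 - of_real (1-t) * z)" by linarith
  have "Re (1 - of_real (1-t) * z) = 1 - (1-t) * Re z" by simp
  then show "1 - (1-t) * Re z \<le> cmod (1 - of_real (1-t) * z)"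
    by (metis abs_Re_le_cmod abs_le_D1)
qed

lemma F_bound:
  assumes z: "cmod z < 1"
  shows "(1 - cmod z ^ 2) powr a * cmod (1 / ((of_real t - 1) * z + 1)) /
     (1 - cmod (of_real t / ((of_real t - 1) * z + 1)) ^ 2) powr a \<le> GG a t (Re z)"
proof -
  define x where "x = Re z"
  define r where "r = cmod (1 - of_real (1-t) * z)"
  define C where "C = 1 - (1-t) * x"
  have x1: "-1 < x" "x < 1" using abs_Re_le_cmod[of z] z unfolding x_def by auto
  note g = G_facts[OF x1]
  have tC: "t < C" using g unfolding C_def by simp
  have Cr: "C \<le> r" using W_norm(2)[OF z] unfolding C_def r_def x_def .
  have r0: "0 < r" using tC Cr t0 by linarith
  have n1: "cmod (1 / ((of_real t - 1) * z + 1)) = 1/r" unfolding W_eq r_def by (simp add: norm_divide)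
  have n2: "cmod (of_real t / ((of_real t - 1) * z + 1)) = t/r" unfolding W_eq r_def using t0 by (simp add: norm_divide)
  have "x^2 \<le> cmod z ^ 2" unfolding x_def by (metis abs_Re_le_cmod abs_ge_zero power_mono power2_abs)
  then have A: "1 - cmod z ^ 2 \<le> 1 - x^2" by simp
  have A0: "0 \<le> 1 - cmod z ^ 2" using z by (simp add: abs_square_le_1 less_imp_le)
  have "(t/r)^2 \<le> (t/C)^2" using tC Cr t0 r0 by (intro power_mono frac_le) auto
  then have P: "1 - t^2/C^2 \<le> 1 - (t/r)^2" by (simp add: power_divide)
  have Q0: "0 < 1 - t^2/C^2" using g unfolding C_def by simp
  have num: "(1 - cmod z ^ 2) powr a * (1/r) \<le> (1 - x^2) powr a * (1/C)"
    using A A0 a0 tC Cr t0 by (intro mult_mono powr_mono2 divide_left_mono) auto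
  have den: "(1 - t^2/C^2) powr a \<le> (1 - (t/r)^2) powr a"
    using P Q0 a0 by (intro powr_mono2) auto
  have "(1 - cmod z ^ 2) powr a * (1/r) / (1 - (t/r)^2) powr a \<le> (1 - x^2) powr a * (1/C) / (1 - t^2/C^2) powr a"
  proof (rule frac_le[OF _ num _ den])
    show "0 < (1 - t^2/C^2) powr a" using Q0 by (metis powr_gt_zero less_irrefl)
    show "0 \<le> (1 - x^2) powr a * (1/C)" using tC t0 by simp
  qed
  also have "... = GG a t x" unfolding GG_def C_def by simp
  finally show ?thesis unfolding n1 n2 x_def .
qed

lemma T_bound:
  assumes hf: "\<And>w. w \<in> ball 0 1 \<Longrightarrow> (1 - cmod w ^ 2) powr a * cmod (f w) \<le> 1"
    and z: "z \<in> ball 0 1"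
  shows "(1 - cmod z ^ 2) powr a * cmod (wcomp_T t f z) \<le> MV a t"
proof -
  have zc: "cmod z < 1" using z by simp
  define w where "w = (of_real t - 1) * z + 1"
  define p where "p = of_real t / w"
  have r: "t < cmod w" unfolding w_def W_eq using W_norm(1)[OF zc] .
  have pc: "cmod p = t / cmod w" unfolding p_def using t0 by (simp add: norm_divide)
  have w0: "0 < cmod w" using r t0 by linarith
  have p1: "cmod p < 1" unfolding pc using r w0 by (simp add: divide_less_eq)
  have P0: "0 < 1 - cmod p ^ 2" using p1 by (simp add: abs_square_less_1)
  have "(1 - cmod p ^ 2) powr a * cmod (f p) \<le> 1" using hf[of p] p1 by simp
  then have fp: "cmod (f p) \<le> 1 / (1 - cmod p ^ 2) powr a" using P0 by (simp add: field_simps)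
  have A0: "0 \<le> 1 - cmod z ^ 2" using zc by (simp add: abs_square_le_1 less_imp_le)
  have "(1 - cmod z ^ 2) powr a * cmod (wcomp_T t f z) = (1 - cmod z ^ 2) powr a * cmod (1/w) * cmod (f p)"
    unfolding wcomp_T_def w_def[symmetric] p_def by (simp add: norm_mult norm_divide)
  also have "... \<le> (1 - cmod z ^ 2) powr a * cmod (1/w) * (1 / (1 - cmod p ^ 2) powr a)"
    using fp A0 by (intro mult_left_mono) auto
  also have "... = (1 - cmod z ^ 2) powr a * cmod (1/w) / (1 - cmod p ^ 2) powr a" by simp
  also have "... \<le> GG a t (Re z)" using F_bound[OF zc] unfolding w_def p_def .
  also have "... = exp (LL a t (Re z))"
    using abs_Re_le_cmod[of z] zc by (intro G_eq) auto
  also have "... \<le> MV a t"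
    using abs_Re_le_cmod[of z] zc by (intro MV_upper) auto
  finally show ?thesis .
qed

lemma fb_Re:
  assumes b: "\<bar>b\<bar> < 1" and z: "cmod z < 1"
  shows "0 < Re (1 - of_real b * z)"
proof -
  have "\<bar>Re z\<bar> \<le> 1" using abs_Re_le_cmod[of z] z by simp
  then have "\<bar>b\<bar> * \<bar>Re z\<bar> \<le> \<bar>b\<bar>" by (simp add: mult_left_le)
  then have "\<bar>b * Re z\<bar> < 1" using b by (simp add: abs_mult)
  then show ?thesis by simp
qed

lemma fb_holo:
  assumes b: "\<bar>b\<bar> < 1"
  shows "fb a b holomorphic_on ball 0 1"
proof -
  have Re: "0 < Re (1 - of_real b * z)" if "z \<in> ball 0 1" for z
    using fb_Re[OF b] that by simp
  show ?thesis unfolding fb_def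
  proof (intro holomorphic_on_divide holomorphic_on_const holomorphic_on_powr holomorphic_intros)
    fix z assume "z \<in> ball (0::complex) 1"
    from Re[OF this] show "1 - complex_of_real b * z \<notin> \<real>\<^sub>\<le>\<^sub>0"
      by (auto simp: complex_nonpos_Reals_iff)
    have "1 - complex_of_real b * z \<noteq> 0"
    proof
      assume h: "1 - complex_of_real b * z = 0"
      have "Re (1 - complex_of_real b * z) = 0" unfolding h by simp
      with Re[OF \<open>z \<in> ball 0 1\<close>] show False by simp
    qed
    then show "(1 - complex_of_real b * z) powr complex_of_real (2 * a) \<noteq> 0"
      by simp
  qed
qed

lemma fb_norm:
  assumes b: "\<bar>b\<bar> < 1"
  shows "cmod (fb a b z) = (1 - b^2) powr a / cmod (1 - of_real b * z) powr (2*a)"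
proof -
  have "cmod (of_real ((1 - b^2) powr a)) = (1 - b^2) powr a" by simp
  moreover have "cmod ((1 - of_real b * z) powr of_real (2*a)) = cmod (1 - of_real b * z) powr (2*a)"
    by (subst norm_powr_real_powr') auto
  ultimately show ?thesis unfolding fb_def by (simp add: norm_divide)
qed

lemma fb_bound:
  assumes b: "\<bar>b\<bar> < 1" and z: "cmod z < 1"
  shows "(1 - cmod z ^ 2) powr a * cmod (fb a b z) \<le> 1"
proof -
  define N where "N = cmod (1 - of_real b * z)"
  have N0: "0 < N" unfolding N_def using fb_Re[OF b z] by (metis abs_Re_le_cmod abs_of_pos le_less_trans norm_zero zero_less_norm_iff less_irrefl)
  have A0: "0 \<le> 1 - cmod z ^ 2" using z by (simp add: abs_square_le_1 less_imp_le)
  have B0: "0 \<le> 1 - b^2" using b by (simp add: abs_square_le_1 less_imp_le)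
  have "N^2 - (1 - cmod z ^ 2) * (1 - b^2) = (Re z - b)^2 + (Im z)^2"
    unfolding N_def cmod_power2 by (simp add: power2_eq_square algebra_simps)
  then have ineq: "(1 - cmod z ^ 2) * (1 - b^2) \<le> N^2"
    by (metis add_nonneg_nonneg diff_ge_0_iff_ge zero_le_power2)
  have "N powr (2*a) = (N powr 2) powr a" by (simp add: powr_powr mult.commute)
  also have "N powr 2 = N^2" using N0 by simp
  finally have Np: "N powr (2*a) = (N^2) powr a" .
  have "(1 - cmod z ^ 2) powr a * cmod (fb a b z) = ((1 - cmod z ^ 2) * (1 - b^2)) powr a / N powr (2*a)"
    unfolding fb_norm[OF b] N_def[symmetric] using A0 B0 by (simp add: powr_mult)
  also have "... \<le> (N^2) powr a / N powr (2*a)"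
    using ineq A0 B0 a0 N0 by (intro divide_right_mono powr_mono2) auto
  also have "... = 1" unfolding Np using N0 by simp
  finally show ?thesis .
qed

lemma fb_korenblum:
  assumes b: "\<bar>b\<bar> < 1"
  shows "in_korenblum a (fb a b)" "korenblum_norm a (fb a b) \<le> 1"
proof -
  show "in_korenblum a (fb a b)" unfolding in_korenblum_def
    using fb_holo[OF b] fb_bound[OF b] by (auto intro!: bdd_aboveI2)
  show "korenblum_norm a (fb a b) \<le> 1" unfolding korenblum_norm_def
    using fb_bound[OF b] by (intro cSUP_least) auto
qed

lemma fb_at:
  assumes b: "\<bar>b\<bar> < 1"
  shows "cmod (fb a b (of_real b)) = 1 / (1 - b^2) powr a"
proof -
  have B0: "0 < 1 - b^2" using b by (simp add: abs_square_less_1)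
  have e: "1 - of_real b * of_real b = (of_real (1 - b^2) :: complex)" by (simp add: power2_eq_square)
  have nb: "cmod (1 - of_real b * of_real b) = 1 - b^2" unfolding e norm_of_real using B0 by simp
  have "cmod (fb a b (of_real b)) = (1 - b^2) powr a / (1 - b^2) powr (2*a)"
    unfolding fb_norm[OF b] nb by (rule refl)
  also have "(1 - b^2) powr (2*a) = (1 - b^2) powr a * (1 - b^2) powr a"
    by (simp add: powr_add[symmetric])
  finally show ?thesis using B0 by simp
qed

lemma fb_value:
  assumes x: "-1 < x" "x < 1"
  defines "b \<equiv> t / (1 - (1-t)*x)"
  shows "\<bar>b\<bar> < 1" "(1 - cmod (of_real x) ^ 2) powr a * cmod (wcomp_T t (fb a b) (of_real x)) = GG a t x"
proof -
  note g = G_facts[OF x]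
  define C where "C = 1 - (1-t)*x"
  have C0: "0 < C" "t < C" using g unfolding C_def by auto
  have bC: "b = t / C" unfolding b_def C_def ..
  show b1: "\<bar>b\<bar> < 1" unfolding bC using C0 t0 by simp
  have W: "(of_real t - 1) * complex_of_real x + 1 = of_real C" unfolding C_def by (simp add: algebra_simps)
  have P: "complex_of_real t / of_real C = of_real b" unfolding bC by simp
  have "wcomp_T t (fb a b) (of_real x) = (1 / of_real C) * fb a b (of_real b)"
    unfolding wcomp_T_def W P ..
  then have "cmod (wcomp_T t (fb a b) (of_real x)) = (1/C) * (1 / (1 - b^2) powr a)"
    using C0 fb_at[OF b1] by (simp add: norm_mult norm_divide)
  moreover have "cmod (of_real x :: complex) ^ 2 = x^2" by simp
  moreover have "b^2 = t^2 / C^2" unfolding bC by (simp add: power_divide)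
  ultimately show "(1 - cmod (of_real x) ^ 2) powr a * cmod (wcomp_T t (fb a b) (of_real x)) = GG a t x"
    unfolding GG_def C_def[symmetric] by simp
qed

end


theorem mainTheorem2:
  fixes \<alpha> t :: real
  assumes "0 < \<alpha>" "\<alpha> < 1" "0 < t" "t < 1"
  defines "x0 \<equiv> (\<alpha> + 2*\<alpha>*t - t - sqrt (4*\<alpha>^2*t - 2*\<alpha>*t + \<alpha>^2 - 2*\<alpha> + 1)) / (2*\<alpha> - 1)"
  shows "korenblum_op_norm \<alpha> (wcomp_T t) =
    (if \<alpha> \<le> 2/3 \<or> (3*\<alpha> - 2) / (4*\<alpha> - 2) \<le> t
     then t powr (\<alpha> - 1) / (1 - t) powr \<alpha>
     else (1 - x0) powr (2*\<alpha> - 1) *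
          ((1 - \<bar>x0 / (1 - t)\<bar>^2) / ((1 - x0)^2 - t^2)) powr \<alpha>)"
proof -
  note Tb = T_bound[OF assms(1-4)]
  note fbk = fb_korenblum[OF assms(1-4)]
  note fbv = fb_value[OF assms(1-4)]
  define S where "S = {korenblum_norm \<alpha> (wcomp_T t f) | f. in_korenblum \<alpha> f \<and> korenblum_norm \<alpha> f \<le> 1}"
  have "korenblum_op_norm \<alpha> (wcomp_T t) = Sup S" unfolding korenblum_op_norm_def S_def ..
  also have "Sup S = MV \<alpha> t"
  proof (rule cSup_eq_non_empty)
    show "S \<noteq> {}" unfolding S_def using fbk[of 0] by auto
  next
    fix v assume "v \<in> S"
    then obtain f where v: "v = korenblum_norm \<alpha> (wcomp_T t f)" and fk: "in_korenblum \<alpha> f"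
      and fn: "korenblum_norm \<alpha> f \<le> 1" unfolding S_def by auto
    have hf: "(1 - cmod w ^ 2) powr \<alpha> * cmod (f w) \<le> 1" if "w \<in> ball 0 1" for w
    proof -
      have "(1 - cmod w ^ 2) powr \<alpha> * cmod (f w) \<le> korenblum_norm \<alpha> f"
        unfolding korenblum_norm_def using fk that unfolding in_korenblum_def
        by (intro cSUP_upper) auto
      then show ?thesis using fn by simp
    qed
    show "v \<le> MV \<alpha> t" unfolding v korenblum_norm_def
      by (rule cSUP_least) (auto intro: Tb[OF hf])
  next
    fix y assume ub: "\<And>v. v \<in> S \<Longrightarrow> v \<le> y"
    show "MV \<alpha> t \<le> y"
    proof (rule MV_attained[OF assms(1-4)])
      fix x :: real assume x: "-1 < x" "x < 1"
      define b where "b = t / (1 - (1-t)*x)"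
      note bv = fbv[OF x, folded b_def]
      have bdd: "bdd_above ((\<lambda>z. (1 - cmod z ^ 2) powr \<alpha> * cmod (wcomp_T t (fb \<alpha> b) z)) ` ball 0 1)"
        using fb_bound[OF assms(1-4) bv(1)] by (intro bdd_aboveI2[where M="MV \<alpha> t"] Tb) auto
      have "exp (LL \<alpha> t x) = GG \<alpha> t x" using G_eq[OF assms(1-4) x] by simp
      also have "... = (1 - cmod (of_real x) ^ 2) powr \<alpha> * cmod (wcomp_T t (fb \<alpha> b) (of_real x))"
        using bv(2) by simp
      also have "... \<le> korenblum_norm \<alpha> (wcomp_T t (fb \<alpha> b))"
        unfolding korenblum_norm_def using x bdd by (intro cSUP_upper) auto
      also have "... \<le> y" using ub fbk[OF bv(1)] unfolding S_def by blast
      finally show "exp (LL \<alpha> t x) \<le> y" .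
    qed
  qed
  finally show ?thesis unfolding MV_def x0_def .
qed

end
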